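(* Let $F$ be a nonempty face of $V_O$, let $\mathcal U_F=\{\lambda\in\Xi_1: F\subseteq H_\lambda\}$ and $\phi(F)=\bigcup_{\lambda\in\mathcal U_F}\mathrm{supp}(\lambda)$. Then $\phi(F)$ is a strongly connected orientation of a subgraph of $G$, and for every $\lambda\in\Xi_1$ we have $\lambda\in\mathcal U_F$ if and only if $\mathrm{supp}(\lambda)\subseteq\phi(F)$.
   Context: $G=(V,E)$ is a finite connected graph, possibly with parallel edges and loops; $\mathbb E$ is the set of oriented edges ($e$ and its reverse $\bar e$). Real $1$-chains $x:\mathbb E\to\mathbb R$ satisfy $x_{\bar e}=-x_e$; $\langle x,y\rangle=\sum_{e\in E}x_ey_e$, $q(x)=\langle x,x\rangle$. A flow satisfies $\sum_{e\text{ with tail }v}x_e=0$ at every vertex $v$; $H$ is the space of real flows and $\Lambda$ the lattice of integer flows. $V_O=\{x\in H: q(x)\le q(x-\mu)\ \forall\mu\in\Lambda\}$. For a flow $x$, $\mathrm{supp}(x)=\{e\in\mathbb E: x_e>0\}$. A circuit is an orientation of a cycle as a directed cycle; $x^C_e=1$ if $e\in C$, $-1$ if $\bar e\in C$, $0$ otherwise. $\Xi_1=\{x^C: C\text{ a circuit}\}$. For $\lambda\in\Xi_1$, $H_\lambda=\{x\in H: 2\langle x,\lambda\rangle=q(\lambda)\}$. An orientation of a subgraph is strongly connected if on each connected component any two vertices are joined by directed paths in both directions. *)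

theory Defs
  imports "HOL-Analysis.Analysis"
begin

text \<open>A finite connected multigraph (loops and parallel edges allowed): vertices are the
 finite type 'v, edges the finite type 'e, each edge e carries a reference orientation from
 vertex src e to vertex tgt e.  Oriented edges are pairs (e, b): (e, True) is e with its
 reference orientation, (e, False) is its reverse.  A real 1-chain x is determined by its
 values on the reference orientations, so chains are vectors in real ^ 'e.\<close>

definition otail :: "('e \<Rightarrow> 'v) \<Rightarrow> ('e \<Rightarrow> 'v) \<Rightarrow> 'e \<times> bool \<Rightarrow> 'v" where
  "otail src tgt a = (if snd a then src (fst a) else tgt (fst a))"

definition ohead :: "('e \<Rightarrow> 'v) \<Rightarrow> ('e \<Rightarrow> 'v) \<Rightarrow> 'e \<times> bool \<Rightarrow> 'v" where
  "ohead src tgt a = (if snd a then tgt (fst a) else src (fst a))"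

definition oval :: "real ^ 'e \<Rightarrow> 'e \<times> bool \<Rightarrow> real" where
  "oval x a = (if snd a then x $ fst a else - (x $ fst a))"

definition connected_graph :: "('e \<Rightarrow> 'v) \<Rightarrow> ('e \<Rightarrow> 'v) \<Rightarrow> bool" where
  "connected_graph src tgt \<longleftrightarrow>
     (\<forall>u v. (u, v) \<in> ({(src e, tgt e) | e. True} \<union> {(tgt e, src e) | e. True})\<^sup>*)"

definition qf :: "real ^ 'e \<Rightarrow> real" where
  "qf x = x \<bullet> x"

definition flows :: "('e::finite \<Rightarrow> 'v) \<Rightarrow> ('e \<Rightarrow> 'v) \<Rightarrow> (real ^ 'e) set" where
  "flows src tgt = {x. \<forall>v. (\<Sum>a\<in>{a. otail src tgt a = v}. oval x a) = 0}"

definition int_flows :: "('e::finite \<Rightarrow> 'v) \<Rightarrow> ('e \<Rightarrow> 'v) \<Rightarrow> (real ^ 'e) set" where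
  "int_flows src tgt = {x \<in> flows src tgt. \<forall>e. x $ e \<in> \<int>}"

definition VO :: "('e::finite \<Rightarrow> 'v) \<Rightarrow> ('e \<Rightarrow> 'v) \<Rightarrow> (real ^ 'e) set" where
  "VO src tgt = {x \<in> flows src tgt. \<forall>\<mu> \<in> int_flows src tgt. qf x \<le> qf (x - \<mu>)}"

definition supp :: "real ^ 'e \<Rightarrow> ('e \<times> bool) set" where
  "supp x = {a. oval x a > 0}"

text \<open>A circuit: orientation of a cycle as a directed cycle, given by a closed directed
 walk a_0, ..., a_{k-1} (k >= 1) with pairwise distinct underlying edges and pairwise
 distinct tail vertices (loops are cycles of length 1, two parallel edges a cycle of length 2).\<close>
definition circuit :: "('e \<Rightarrow> 'v) \<Rightarrow> ('e \<Rightarrow> 'v) \<Rightarrow> ('e \<times> bool) set \<Rightarrow> bool" where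
  "circuit src tgt C \<longleftrightarrow> (\<exists>cs. cs \<noteq> [] \<and> C = set cs \<and> distinct (map fst cs) \<and>
      distinct (map (otail src tgt) cs) \<and>
      (\<forall>i < length cs. ohead src tgt (cs ! i) = otail src tgt (cs ! ((i + 1) mod length cs))))"

definition circ_vec :: "('e \<times> bool) set \<Rightarrow> real ^ 'e" where
  "circ_vec C = (\<chi> e. if (e, True) \<in> C then 1 else if (e, False) \<in> C then -1 else 0)"

definition Xi1 :: "('e \<Rightarrow> 'v) \<Rightarrow> ('e \<Rightarrow> 'v) \<Rightarrow> (real ^ 'e) set" where
  "Xi1 src tgt = {circ_vec C | C. circuit src tgt C}"

definition Hyp :: "('e::finite \<Rightarrow> 'v) \<Rightarrow> ('e \<Rightarrow> 'v) \<Rightarrow> real ^ 'e \<Rightarrow> (real ^ 'e) set" where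
  "Hyp src tgt lam = {x \<in> flows src tgt. 2 * (x \<bullet> lam) = qf lam}"

text \<open>D is an orientation of a subgraph (each edge used in at most one direction), and it is
 strongly connected: vertices in the same connected component of the underlying subgraph are
 joined by directed paths in both directions.\<close>
definition strongly_connected_orientation ::
    "('e \<Rightarrow> 'v) \<Rightarrow> ('e \<Rightarrow> 'v) \<Rightarrow> ('e \<times> bool) set \<Rightarrow> bool" where
  "strongly_connected_orientation src tgt D \<longleftrightarrow>
     (\<forall>e. \<not> ((e, True) \<in> D \<and> (e, False) \<in> D)) \<and>
     (let R = {(otail src tgt a, ohead src tgt a) | a. a \<in> D} in
        \<forall>u v. (u, v) \<in> (R \<union> R\<inverse>)\<^sup>* \<longrightarrow> (u, v) \<in> R\<^sup>*)"

end

theory Submission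
  imports Defs
begin


definition rv :: "'e \<times> bool \<Rightarrow> 'e \<times> bool" where "rv a = (fst a, \<not> snd a)"

lemma oval_rv[simp]: "oval x (rv a) = - oval x a" by (simp add: oval_def rv_def)
lemma rv_rv[simp]: "rv (rv a) = a" by (simp add: rv_def)
lemma otail_rv[simp]: "otail s t (rv a) = ohead s t a" by (simp add: rv_def otail_def ohead_def)
lemma ohead_rv[simp]: "ohead s t (rv a) = otail s t a" by (simp add: rv_def otail_def ohead_def)

fun wpath :: "('e \<Rightarrow> 'v) \<Rightarrow> ('e \<Rightarrow> 'v) \<Rightarrow> 'v \<Rightarrow> ('e \<times> bool) list \<Rightarrow> 'v \<Rightarrow> bool" where
  "wpath s t u [] v = (u = v)"
| "wpath s t u (a # as) v = (otail s t a = u \<and> wpath s t (ohead s t a) as v)"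

lemma wpath_append: "wpath s t u (xs @ ys) v \<longleftrightarrow> (\<exists>w. wpath s t u xs w \<and> wpath s t w ys v)"
  by (induction xs arbitrary: u) auto

definition sl :: "real ^ 'e \<Rightarrow> ('e \<times> bool) list \<Rightarrow> real" where
  "sl x ws = sum_list (map (oval x) ws)"

lemma sl_simps[simp]: "sl x [] = 0" "sl x (a # ws) = oval x a + sl x ws"
  "sl x (xs @ ys) = sl x xs + sl x ys"
  by (simp_all add: sl_def)

definition cyc :: "('e \<Rightarrow> 'v) \<Rightarrow> ('e \<Rightarrow> 'v) \<Rightarrow> ('e \<times> bool) list \<Rightarrow> bool" where
  "cyc s t cs \<longleftrightarrow> (\<forall>i < length cs. ohead s t (cs ! i) = otail s t (cs ! ((i + 1) mod length cs)))"

lemma chain_wpath: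
  "(\<forall>i. i+1 < length ws \<longrightarrow> ohead s t (ws!i) = otail s t (ws!(i+1))) \<Longrightarrow> ws \<noteq> [] \<Longrightarrow>
    wpath s t (otail s t (hd ws)) ws (ohead s t (last ws))"
proof (induction ws)
  case Nil then show ?case by simp
next
  case (Cons a ws)
  show ?case
  proof (cases "ws = []")
    case True then show ?thesis by simp
  next
    case False
    have h: "\<forall>i. i+1 < length ws \<longrightarrow> ohead s t (ws!i) = otail s t (ws!(i+1))"
      using Cons.prems(1) by (metis Suc_eq_plus1 Suc_less_eq length_Cons nth_Cons_Suc)
    have "ohead s t a = otail s t (hd ws)" using Cons.prems(1) False
      by (metis hd_conv_nth length_Cons length_greater_0_conv nth_Cons_0 nth_Cons_Suc One_nat_def add.commute add_less_cancel_left plus_1_eq_Suc)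
    then show ?thesis using Cons.IH[OF h False] False by simp
  qed
qed

lemma wpath_chain:
  "wpath s t u ws v \<Longrightarrow> (\<forall>i. i+1 < length ws \<longrightarrow> ohead s t (ws!i) = otail s t (ws!(i+1))) \<and>
     (ws \<noteq> [] \<longrightarrow> otail s t (hd ws) = u \<and> ohead s t (last ws) = v)"
proof (induction ws arbitrary: u)
  case Nil then show ?case by simp
next
  case (Cons a ws)
  then have IH: "(\<forall>i. i+1 < length ws \<longrightarrow> ohead s t (ws!i) = otail s t (ws!(i+1))) \<and>
     (ws \<noteq> [] \<longrightarrow> otail s t (hd ws) = ohead s t a \<and> ohead s t (last ws) = v)"
    using Cons.IH[of "ohead s t a"] by simp
  have "\<forall>i. i+1 < length (a#ws) \<longrightarrow> ohead s t ((a#ws)!i) = otail s t ((a#ws)!(i+1))"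
  proof (intro allI impI)
    fix i assume i: "i+1 < length (a#ws)"
    show "ohead s t ((a#ws)!i) = otail s t ((a#ws)!(i+1))"
    proof (cases i)
      case 0 then show ?thesis using IH i by (simp add: hd_conv_nth)
    next
      case (Suc j) then show ?thesis using IH i by simp
    qed
  qed
  moreover have "ohead s t (last (a#ws)) = v" using Cons.prems by (cases "ws = []") (auto simp: IH)
  ultimately show ?case using Cons.prems by simp
qed

lemma cyc_wpath: assumes "cs \<noteq> []" "cyc s t cs"
  shows "wpath s t (otail s t (hd cs)) cs (otail s t (hd cs))"
proof -
  let ?n = "length cs"
  have "\<forall>i. i+1 < length cs \<longrightarrow> ohead s t (cs!i) = otail s t (cs!(i+1))"
    using assms(2) unfolding cyc_def by auto
  from chain_wpath[OF this assms(1)]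
  have "wpath s t (otail s t (hd cs)) cs (ohead s t (last cs))" .
  moreover have "ohead s t (last cs) = otail s t (hd cs)"
  proof -
    have "?n - 1 < ?n" using assms(1) by simp
    then have "ohead s t (cs ! (?n - 1)) = otail s t (cs ! ((?n - 1 + 1) mod ?n))"
      using assms(2) unfolding cyc_def by blast
    moreover have "(?n - 1 + 1) mod ?n = 0" using assms(1) by simp
    ultimately show ?thesis using assms(1) by (simp add: last_conv_nth hd_conv_nth)
  qed
  ultimately show ?thesis by simp
qed

lemma wpath_cyc: assumes "wpath s t u ws u" "ws \<noteq> []" shows "cyc s t ws"
  unfolding cyc_def
proof (intro allI impI)
  fix i assume i: "i < length ws"
  note W = wpath_chain[OF assms(1)]
  show "ohead s t (ws ! i) = otail s t (ws ! ((i + 1) mod length ws))"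
  proof (cases "i + 1 < length ws")
    case True then show ?thesis using W by simp
  next
    case False
    then have "i = length ws - 1" using i by simp
    then have "(i+1) mod length ws = 0" "ws ! i = last ws" using assms(2) by (simp_all add: last_conv_nth)
    then show ?thesis using W assms(2) by (simp add: hd_conv_nth)
  qed
qed

lemma wpath_rotate: "wpath s t u (xs @ ys) u \<Longrightarrow> \<exists>w. wpath s t w (ys @ xs) w"
  by (auto simp: wpath_append)

lemma not_distinct_decomp2: "\<not> distinct (map f xs) \<Longrightarrow> \<exists>p a q b r. xs = p @ a # q @ b # r \<and> f a = f b"
proof (induction xs)
  case Nil then show ?case by simp
next
  case (Cons x xs)
  show ?case
  proof (cases "f x \<in> f ` set xs")
    case True
    then obtain b where b: "b \<in> set xs" "f b = f x" by auto
    then obtain q r where "xs = q @ b # r" by (meson split_list)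
    then show ?thesis using b by (metis append_Nil append_Cons)
  next
    case False
    then have "\<not> distinct (map f xs)" using Cons.prems by simp
    then obtain p a q b r where "xs = p @ a # q @ b # r \<and> f a = f b" using Cons.IH by blast
    then show ?thesis by (metis append_Cons)
  qed
qed



definition nb :: "('e \<times> bool) set \<Rightarrow> bool" where
  "nb C \<longleftrightarrow> (\<forall>e. \<not> ((e, True) \<in> C \<and> (e, False) \<in> C))"

lemma circuit_nb: "circuit s t C \<Longrightarrow> nb C"
  unfolding circuit_def nb_def
proof (clarify)
  fix cs e assume "distinct (map fst cs)" "(e, True) \<in> set cs" "(e, False) \<in> set cs"
  then show False using distinct_map inj_on_def by (metis fst_conv snd_conv)
qed

lemma nb_rv: "nb C \<Longrightarrow> a \<in> C \<Longrightarrow> rv a \<notin> C"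
  unfolding nb_def rv_def by (cases a; cases "snd a") auto

lemma oval_circ: "nb C \<Longrightarrow> oval (circ_vec C) a = (if a \<in> C then 1 else if rv a \<in> C then -1 else 0)"
  unfolding nb_def by (cases a; cases "snd a") (auto simp: oval_def circ_vec_def rv_def)

lemma supp_circ: "nb C \<Longrightarrow> supp (circ_vec C) = C"
  unfolding supp_def by (auto simp: oval_circ)

lemma inner_circ:
  fixes x :: "real ^ 'e::finite"
  assumes "nb C"
  shows "x \<bullet> circ_vec C = (\<Sum>a\<in>C. oval x a)"
proof -
  have "(\<Sum>a\<in>C. oval x a) = (\<Sum>a\<in>UNIV. if a \<in> C then oval x a else 0)"
    by (simp add: sum.If_cases)
  also have "\<dots> = (\<Sum>e\<in>UNIV. \<Sum>b\<in>UNIV. if (e,b) \<in> C then oval x (e,b) else 0)"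
    by (simp add: sum.cartesian_product)
  also have "\<dots> = (\<Sum>e\<in>UNIV. x $ e * circ_vec C $ e)"
  proof (rule sum.cong[OF refl])
    fix e
    show "(\<Sum>b\<in>UNIV. if (e,b) \<in> C then oval x (e,b) else 0) = x $ e * circ_vec C $ e"
      using assms unfolding nb_def by (auto simp: UNIV_bool oval_def circ_vec_def)
  qed
  finally show ?thesis by (simp add: inner_vec_def)
qed

lemma qf_circ: "nb (C :: ('e::finite \<times> bool) set) \<Longrightarrow> qf (circ_vec C) = real (card C)"
  unfolding qf_def by (simp add: inner_circ oval_circ)

lemma card_filter_inj:
  assumes "inj_on f C" shows "card {a\<in>C. f a = v} = card ({v} \<inter> f ` C)"
proof -
  have "f ` {a\<in>C. f a = v} = {v} \<inter> f ` C" by auto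
  moreover have "inj_on f {a\<in>C. f a = v}" using assms by (rule inj_on_subset) auto
  ultimately show ?thesis by (metis card_image)
qed

lemma circuit_heads:
  assumes "cs \<noteq> []" "cyc s t cs"
  shows "map (ohead s t) cs = rotate1 (map (otail s t) cs)"
proof (rule nth_equalityI)
  show "length (map (ohead s t) cs) = length (rotate1 (map (otail s t) cs))" by simp
next
  fix i assume "i < length (map (ohead s t) cs)"
  then have i: "i < length cs" by simp
  then have "0 < length cs" by (rule le_less_trans[OF le0])
  then have "Suc i mod length cs < length cs" by (rule mod_less_divisor)
  then show "map (ohead s t) cs ! i = rotate1 (map (otail s t) cs) ! i"
    using assms(2) i unfolding cyc_def by (simp add: nth_rotate1)
qed

lemma inj_rv: "inj rv" by (rule injI) (metis rv_rv)

lemma rv_image: "rv ` S = {a. rv a \<in> S}"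
proof (rule set_eqI)
  fix x
  show "x \<in> rv ` S \<longleftrightarrow> x \<in> {a. rv a \<in> S}"
  proof
    assume "x \<in> rv ` S" then show "x \<in> {a. rv a \<in> S}" by auto
  next
    assume "x \<in> {a. rv a \<in> S}"
    then have "rv x \<in> S" by simp
    then have "rv (rv x) \<in> rv ` S" by (rule imageI)
    then show "x \<in> rv ` S" by simp
  qed
qed

lemma sum_ind: "finite A \<Longrightarrow> (\<Sum>a\<in>A. if P a then 1 else 0 :: real) = real (card {a\<in>A. P a})"
  by (simp add: sum.inter_filter[symmetric])

lemma circ_flow:
  fixes s t :: "'e::finite \<Rightarrow> 'v"
  assumes "circuit s t C"
  shows "circ_vec C \<in> flows s t"
proof -
  have "\<exists>cs. cs \<noteq> [] \<and> C = set cs \<and> distinct (map fst cs) \<and>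
    distinct (map (otail s t) cs) \<and> cyc s t cs"
    using assms unfolding circuit_def cyc_def .
  then obtain cs where cs: "cs \<noteq> []" "C = set cs" "distinct (map fst cs)"
    "distinct (map (otail s t) cs)" "cyc s t cs" by blast
  have nbC: "nb C" using circuit_nb[OF assms] .
  have hd: "map (ohead s t) cs = rotate1 (map (otail s t) cs)" using circuit_heads[OF cs(1,5)] .
  have injT: "inj_on (otail s t) C" using cs(2,4) by (simp add: distinct_map)
  have "distinct (map (ohead s t) cs)" using hd cs(4) by simp
  then have injH: "inj_on (ohead s t) C" using cs(2) by (simp add: distinct_map)
  have "set (map (ohead s t) cs) = set (map (otail s t) cs)" using hd by simp
  then have img: "ohead s t ` C = otail s t ` C" using cs(2) by simp
  show ?thesis unfolding flows_def
  proof (clarify)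
    fix v
    let ?A = "{a. otail s t a = v}"
    have "(\<Sum>a\<in>?A. oval (circ_vec C) a) =
        (\<Sum>a\<in>?A. (if a \<in> C then 1 else 0) - (if rv a \<in> C then 1 else 0))"
    proof (rule sum.cong[OF refl])
      fix a
      show "oval (circ_vec C) a = (if a \<in> C then 1 else 0) - (if rv a \<in> C then 1 else 0)"
      proof (cases "a \<in> C")
        case True
        then have "rv a \<notin> C" by (rule nb_rv[OF nbC])
        with True show ?thesis by (simp add: oval_circ[OF nbC])
      next
        case False then show ?thesis by (simp add: oval_circ[OF nbC])
      qed
    qed
    also have "\<dots> = real (card {a\<in>?A. a \<in> C}) - real (card {a\<in>?A. rv a \<in> C})"
      by (simp only: sum_subtractf sum_ind[OF finite_class.finite_UNIV[THEN finite_subset[OF subset_UNIV]]])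
    finally have S: "(\<Sum>a\<in>?A. oval (circ_vec C) a) = real (card {a\<in>?A. a \<in> C}) - real (card {a\<in>?A. rv a \<in> C})" .
    have e1: "{a\<in>?A. a \<in> C} = {a\<in>C. otail s t a = v}" by blast
    have e2: "{a\<in>?A. rv a \<in> C} = {a. otail s t a = v \<and> rv a \<in> C}" by blast
    have e3: "card {a. otail s t a = v \<and> rv a \<in> C} = card {a\<in>C. ohead s t a = v}"
    proof -
      have "rv ` {a\<in>C. ohead s t a = v} = {a. otail s t a = v \<and> rv a \<in> C}"
        unfolding rv_image by auto
      moreover have "inj_on rv {a\<in>C. ohead s t a = v}" using inj_rv by (rule inj_on_subset) simp
      ultimately show ?thesis using card_image by fastforce
    qed
    have e4: "card {a\<in>C. otail s t a = v} = card {a\<in>C. ohead s t a = v}"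
      using card_filter_inj[OF injT] card_filter_inj[OF injH] img by simp
    show "(\<Sum>a\<in>?A. oval (circ_vec C) a) = 0" unfolding S e1 e2 e3 e4 by simp
  qed
qed

lemma circ_int_flow: fixes s t :: "'e::finite \<Rightarrow> 'v" shows "circuit s t C \<Longrightarrow> circ_vec C \<in> int_flows s t"
  unfolding int_flows_def
proof (intro CollectI conjI allI)
  assume "circuit s t C"
  then show "circ_vec C \<in> flows s t" by (rule circ_flow)
next
  fix e
  show "circ_vec C $ e \<in> \<int>" unfolding circ_vec_def by simp
qed

lemma VO_ineq: "x \<in> VO s t \<Longrightarrow> \<mu> \<in> int_flows s t \<Longrightarrow> 2 * (x \<bullet> \<mu>) \<le> qf \<mu>"
proof -
  assume x: "x \<in> VO s t" and m: "\<mu> \<in> int_flows s t"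
  then have "qf x \<le> qf (x - \<mu>)" unfolding VO_def by blast
  moreover have "qf (x - \<mu>) = qf x - 2 * (x \<bullet> \<mu>) + qf \<mu>"
    unfolding qf_def by (simp add: inner_diff_left inner_diff_right inner_commute)
  ultimately show ?thesis by simp
qed



lemma circuit_of_walk:
  assumes "wpath s t u ws u" "ws \<noteq> []" "distinct (map fst ws)" "distinct (map (otail s t) ws)"
  shows "circuit s t (set ws)"
proof -
  have "cyc s t ws" by (rule wpath_cyc[OF assms(1,2)])
  then show ?thesis unfolding circuit_def
    apply (intro exI[of _ ws])
    using assms(2-4) unfolding cyc_def by simp
qed

lemma closed_walk:
  fixes x :: "real ^ 'e::finite" and s t :: "'e \<Rightarrow> 'v"
  assumes x: "x \<in> VO s t"
  shows "wpath s t u ws u \<Longrightarrow> 2 * sl x ws \<le> real (length ws)"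
proof (induction "length ws" arbitrary: u ws rule: less_induct)
  case less
  show ?case
  proof (cases "ws = []")
    case True then show ?thesis by simp
  next
    case ne: False
    show ?thesis
    proof (cases "distinct (map (otail s t) ws)")
      case False
      then obtain p a q b r where d: "ws = p @ a # q @ b # r" "otail s t a = otail s t b"
        using not_distinct_decomp2 by blast
      from less.prems d obtain w1 w2 where
        w: "wpath s t u p w1" "otail s t a = w1" "wpath s t (ohead s t a) q w2"
           "otail s t b = w2" "wpath s t (ohead s t b) r u"
        by (auto simp: wpath_append)
      have c1: "wpath s t w1 (a # q) w1" using w d(2) by simp
      have c2: "wpath s t u (p @ b # r) u" using w d(2) by (auto simp: wpath_append)
      have "2 * sl x (a # q) \<le> real (length (a # q))" by (rule less.hyps[OF _ c1]) (simp add: d(1))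
      moreover have "2 * sl x (p @ b # r) \<le> real (length (p @ b # r))"
        by (rule less.hyps[OF _ c2]) (simp add: d(1))
      ultimately show ?thesis using d(1) by simp
    next
      case dT: True
      show ?thesis
      proof (cases "distinct (map fst ws)")
        case False
        then obtain p a q b r where d: "ws = p @ a # q @ b # r" "fst a = fst b"
          using not_distinct_decomp2 by blast
        have "a \<noteq> b" using dT d(1) by auto
        then have b: "b = rv a" using d(2) by (cases a; cases b) (auto simp: rv_def)
        from less.prems d(1) obtain w1 w2 where
          w: "wpath s t u p w1" "otail s t a = w1" "wpath s t (ohead s t a) q w2"
             "otail s t b = w2" "wpath s t (ohead s t b) r u"
          by (auto simp: wpath_append)
        have c1: "wpath s t (ohead s t a) q (ohead s t a)" using w b by simp
        have c2: "wpath s t u (p @ r) u" using w b by (auto simp: wpath_append)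
        have "2 * sl x q \<le> real (length q)" by (rule less.hyps[OF _ c1]) (simp add: d(1))
        moreover have "2 * sl x (p @ r) \<le> real (length (p @ r))"
          by (rule less.hyps[OF _ c2]) (simp add: d(1))
        ultimately show ?thesis using d(1) b by simp
      next
        case dF: True
        have circ: "circuit s t (set ws)" by (rule circuit_of_walk[OF less.prems ne dF dT])
        have nbw: "nb (set ws)" by (rule circuit_nb[OF circ])
        have dw: "distinct ws" using dF by (simp add: distinct_map)
        have "2 * (x \<bullet> circ_vec (set ws)) \<le> qf (circ_vec (set ws))"
          by (rule VO_ineq[OF x circ_int_flow[OF circ]])
        moreover have "x \<bullet> circ_vec (set ws) = sl x ws"
          using inner_circ[OF nbw] dw by (simp add: sl_def sum_list_distinct_conv_sum_set)
        moreover have "qf (circ_vec (set ws)) = real (length ws)"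
          using qf_circ[OF nbw] dw by (simp add: distinct_card)
        ultimately show ?thesis by simp
      qed
    qed
  qed
qed

lemma circ_path:
  assumes "circuit s t C" "a \<in> C"
  shows "\<exists>P. wpath s t (ohead s t a) P (otail s t a) \<and> set (a # P) = C \<and> distinct (a # P)"
proof -
  have "\<exists>cs. cs \<noteq> [] \<and> C = set cs \<and> distinct (map fst cs) \<and>
    distinct (map (otail s t) cs) \<and> cyc s t cs"
    using assms(1) unfolding circuit_def cyc_def .
  then obtain cs where cs: "cs \<noteq> []" "C = set cs" "distinct (map fst cs)"
    "distinct (map (otail s t) cs)" "cyc s t cs" by blast
  have w: "wpath s t (otail s t (hd cs)) cs (otail s t (hd cs))" by (rule cyc_wpath[OF cs(1,5)])
  obtain xs ys where xy: "cs = xs @ a # ys" using assms(2) cs(2) by (meson split_list)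
  obtain w where "wpath s t w ((a # ys) @ xs) w" using wpath_rotate[of s t _ xs "a # ys"] w xy by blast
  then have "wpath s t (ohead s t a) (ys @ xs) (otail s t a)" by simp
  moreover have "set (a # ys @ xs) = C" using cs(2) xy by auto
  moreover have "distinct (a # ys @ xs)" using cs(3) xy by (auto simp: distinct_map)
  ultimately show ?thesis by blast
qed

definition tight :: "('e::finite \<Rightarrow> 'v) \<Rightarrow> ('e \<Rightarrow> 'v) \<Rightarrow> real ^ 'e \<Rightarrow> ('e \<times> bool) set \<Rightarrow> bool" where
  "tight s t x C \<longleftrightarrow> x \<in> Hyp s t (circ_vec C)"

lemma tight_iff:
  "circuit s t C \<Longrightarrow> x \<in> flows s t \<Longrightarrow> tight s t x C \<longleftrightarrow> 2 * (\<Sum>a\<in>C. oval x a) = real (card C)"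
  unfolding tight_def Hyp_def using circuit_nb inner_circ qf_circ by fastforce

lemma good_path:
  assumes "x \<in> flows s t" "circuit s t C" "tight s t x C" "a \<in> C"
  shows "\<exists>P. wpath s t (ohead s t a) P (otail s t a) \<and> set P \<subseteq> C \<and>
      2 * sl x P - real (length P) = 1 - 2 * oval x a"
proof -
  obtain P where P: "wpath s t (ohead s t a) P (otail s t a)" "set (a # P) = C" "distinct (a # P)"
    using circ_path[OF assms(2,4)] by blast
  have "2 * (\<Sum>a\<in>C. oval x a) = real (card C)" using tight_iff assms by blast
  moreover have "(\<Sum>a\<in>C. oval x a) = oval x a + sl x P"
    using P(2,3) by (metis sl_def sl_simps(2) sum_list_distinct_conv_sum_set)
  moreover have "card C = 1 + length P" using P(2,3) distinct_card by fastforce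
  ultimately have "2 * sl x P - real (length P) = 1 - 2 * oval x a" by simp
  then show ?thesis using P by auto
qed

lemma chain_back:
  "wpath s t u ws v \<Longrightarrow>
   (\<forall>a\<in>set ws. \<exists>P. wpath s t (ohead s t a) P (otail s t a) \<and> 2 * sl x P - real (length P) = 1 - 2 * oval x a)
   \<Longrightarrow> \<exists>Q. wpath s t v Q u \<and> 2 * sl x Q - real (length Q) = real (length ws) - 2 * sl x ws"
proof (induction ws arbitrary: u)
  case Nil then show ?case by (intro exI[of _ "[]"]) simp
next
  case (Cons a ws)
  then have u: "otail s t a = u" and w: "wpath s t (ohead s t a) ws v" by auto
  obtain Q where Q: "wpath s t v Q (ohead s t a)" "2 * sl x Q - real (length Q) = real (length ws) - 2 * sl x ws"
    using Cons.IH[OF w] Cons.prems(2) by auto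
  obtain P where P: "wpath s t (ohead s t a) P (otail s t a)" "2 * sl x P - real (length P) = 1 - 2 * oval x a"
    using Cons.prems(2) by auto
  have "wpath s t v (Q @ P) u" using Q P u by (auto simp: wpath_append)
  moreover have "2 * sl x (Q @ P) - real (length (Q @ P)) = real (length (a # ws)) - 2 * sl x (a # ws)"
    using Q(2) P(2) by simp
  ultimately show ?case by blast
qed

definition Dset :: "('e::finite \<Rightarrow> 'v) \<Rightarrow> ('e \<Rightarrow> 'v) \<Rightarrow> real ^ 'e \<Rightarrow> ('e \<times> bool) set" where
  "Dset s t x = \<Union>{C. circuit s t C \<and> tight s t x C}"

lemma D_arc:
  assumes "x \<in> flows s t" "a \<in> Dset s t x"
  shows "\<exists>P. wpath s t (ohead s t a) P (otail s t a) \<and> set P \<subseteq> Dset s t x \<and>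
      2 * sl x P - real (length P) = 1 - 2 * oval x a"
proof -
  obtain C where C: "circuit s t C" "tight s t x C" "a \<in> C" using assms(2) unfolding Dset_def by blast
  obtain P where "wpath s t (ohead s t a) P (otail s t a)" "set P \<subseteq> C"
      "2 * sl x P - real (length P) = 1 - 2 * oval x a"
    using good_path[OF assms(1) C] by blast
  moreover have "C \<subseteq> Dset s t x" using C unfolding Dset_def by blast
  ultimately show ?thesis by blast
qed

lemma VO_flows: "x \<in> VO s t \<Longrightarrow> x \<in> flows s t" unfolding VO_def by blast

lemma D_nb:
  assumes x: "x \<in> VO s t"
  shows "nb (Dset s t x)"
  unfolding nb_def
proof (intro allI notI)
  fix e assume "(e, True) \<in> Dset s t x \<and> (e, False) \<in> Dset s t x"
  then have a1: "(e, True) \<in> Dset s t x" and a2: "rv (e, True) \<in> Dset s t x" by (auto simp: rv_def)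
  let ?a = "(e, True)"
  obtain P1 where P1: "wpath s t (ohead s t ?a) P1 (otail s t ?a)"
      "2 * sl x P1 - real (length P1) = 1 - 2 * oval x ?a"
    using D_arc[OF VO_flows[OF x] a1] by blast
  obtain P2 where P2: "wpath s t (otail s t ?a) P2 (ohead s t ?a)"
      "2 * sl x P2 - real (length P2) = 1 + 2 * oval x ?a"
    using D_arc[OF VO_flows[OF x] a2] by auto
  have "wpath s t (ohead s t ?a) (P1 @ P2) (ohead s t ?a)" using P1 P2 by (auto simp: wpath_append)
  then have "2 * sl x (P1 @ P2) \<le> real (length (P1 @ P2))" by (rule closed_walk[OF x])
  then show False using P1(2) P2(2) by simp
qed

lemma D_tight:
  assumes x: "x \<in> VO s t" and C: "circuit s t C" and sub: "C \<subseteq> Dset s t x"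
  shows "tight s t x C"
proof -
  have "\<exists>cs. cs \<noteq> [] \<and> C = set cs \<and> distinct (map fst cs) \<and>
    distinct (map (otail s t) cs) \<and> cyc s t cs"
    using C unfolding circuit_def cyc_def .
  then obtain cs where cs: "cs \<noteq> []" "C = set cs" "distinct (map fst cs)"
    "distinct (map (otail s t) cs)" "cyc s t cs" by blast
  let ?u = "otail s t (hd cs)"
  have w: "wpath s t ?u cs ?u" by (rule cyc_wpath[OF cs(1,5)])
  have "\<forall>a\<in>set cs. \<exists>P. wpath s t (ohead s t a) P (otail s t a) \<and> 2 * sl x P - real (length P) = 1 - 2 * oval x a"
  proof
    fix a assume "a \<in> set cs"
    then have "a \<in> Dset s t x" using sub cs(2) by blast
    from D_arc[OF VO_flows[OF x] this] obtain P where
      "wpath s t (ohead s t a) P (otail s t a)" "2 * sl x P - real (length P) = 1 - 2 * oval x a"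
      by blast
    then show "\<exists>P. wpath s t (ohead s t a) P (otail s t a) \<and> 2 * sl x P - real (length P) = 1 - 2 * oval x a"
      by blast
  qed
  then obtain Q where Q: "wpath s t ?u Q ?u" "2 * sl x Q - real (length Q) = real (length cs) - 2 * sl x cs"
    using chain_back[OF w] by blast
  have "2 * sl x Q \<le> real (length Q)" by (rule closed_walk[OF x Q(1)])
  moreover have "2 * sl x cs \<le> real (length cs)" by (rule closed_walk[OF x w])
  ultimately have eq: "2 * sl x cs = real (length cs)" using Q(2) by simp
  have dc: "distinct cs" using cs(3) by (simp add: distinct_map)
  have "2 * (\<Sum>a\<in>C. oval x a) = real (card C)"
    using eq dc cs(2) by (simp add: sl_def sum_list_distinct_conv_sum_set distinct_card)
  then show ?thesis using tight_iff[OF C VO_flows[OF x]] by blast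
qed

lemma path_R:
  "wpath s t u P v \<Longrightarrow> set P \<subseteq> D \<Longrightarrow> (u, v) \<in> {(otail s t a, ohead s t a) | a. a \<in> D}\<^sup>*"
proof (induction P arbitrary: u)
  case Nil then show ?case by simp
next
  case (Cons a P)
  then have "(ohead s t a, v) \<in> {(otail s t a, ohead s t a) | a. a \<in> D}\<^sup>*" by auto
  moreover have "(u, ohead s t a) \<in> {(otail s t a, ohead s t a) | a. a \<in> D}"
  proof -
    have a: "a \<in> D" "otail s t a = u" using Cons.prems by auto
    then have "(otail s t a, ohead s t a) \<in> {(otail s t a, ohead s t a) | a. a \<in> D}" by blast
    then show ?thesis using a by simp
  qed
  ultimately show ?case by (blast intro: converse_rtrancl_into_rtrancl)
qed

lemma D_sc:
  assumes x: "x \<in> VO s t"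
  shows "strongly_connected_orientation s t (Dset s t x)"
proof -
  let ?D = "Dset s t x"
  define R where "R = {(otail s t a, ohead s t a) | a. a \<in> ?D}"
  have "R \<union> R\<inverse> \<subseteq> R\<^sup>*"
  proof
    fix p assume "p \<in> R \<union> R\<inverse>"
    then show "p \<in> R\<^sup>*"
    proof
      assume "p \<in> R" then show ?thesis by (rule r_into_rtrancl)
    next
      assume "p \<in> R\<inverse>"
      then have "(snd p, fst p) \<in> R" by (cases p) simp
      then obtain a where a: "a \<in> ?D" "(snd p, fst p) = (otail s t a, ohead s t a)" unfolding R_def by blast
      then have a2: "p = (ohead s t a, otail s t a)" by (cases p) simp
      obtain P where P: "wpath s t (ohead s t a) P (otail s t a)" "set P \<subseteq> ?D"
        using D_arc[OF VO_flows[OF x] a(1)] by blast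
      have "(ohead s t a, otail s t a) \<in> R\<^sup>*" unfolding R_def by (rule path_R[OF P])
      then show ?thesis using a2 by simp
    qed
  qed
  then have "(R \<union> R\<inverse>)\<^sup>* \<subseteq> (R\<^sup>*)\<^sup>*" by (rule rtrancl_mono)
  then have sub: "(R \<union> R\<inverse>)\<^sup>* \<subseteq> R\<^sup>*" by simp
  show ?thesis unfolding strongly_connected_orientation_def Let_def R_def[symmetric]
  proof (intro conjI allI impI)
    show "\<And>e. \<not> ((e, True) \<in> ?D \<and> (e, False) \<in> ?D)" using D_nb[OF x] unfolding nb_def by blast
    show "\<And>u v. (u, v) \<in> (R \<union> R\<inverse>)\<^sup>* \<Longrightarrow> (u, v) \<in> R\<^sup>*" using sub by blast
  qed
qed



lemma Xi1_int: "l \<in> Xi1 s t \<Longrightarrow> l \<in> int_flows s t"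
  unfolding Xi1_def using circ_int_flow by blast

lemma finite_Xi1: "finite (Xi1 (s :: 'e::finite \<Rightarrow> 'v) t)"
proof -
  have "Xi1 s t \<subseteq> circ_vec ` UNIV" unfolding Xi1_def by blast
  moreover have "finite (circ_vec ` (UNIV :: ('e \<times> bool) set set))" by simp
  ultimately show ?thesis by (rule finite_subset)
qed

theorem mainTheorem6:
  fixes src tgt :: "'e::finite \<Rightarrow> 'v::finite"
    and F :: "(real ^ 'e) set"
  assumes "connected_graph src tgt"
    and "F face_of VO src tgt"
    and "F \<noteq> {}"
  shows "strongly_connected_orientation src tgt
           (\<Union>l \<in> {l \<in> Xi1 src tgt. F \<subseteq> Hyp src tgt l}. supp l)
       \<and> (\<forall>l \<in> Xi1 src tgt. (l \<in> {l \<in> Xi1 src tgt. F \<subseteq> Hyp src tgt l}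
              \<longleftrightarrow> supp l \<subseteq> (\<Union>l \<in> {l \<in> Xi1 src tgt. F \<subseteq> Hyp src tgt l}. supp l)))"
proof -
  have Fsub: "F \<subseteq> VO src tgt" and cvx: "convex F" using assms(2) unfolding face_of_def by auto
  define Ts where "Ts x = {l \<in> Xi1 src tgt. x \<in> Hyp src tgt l}" for x
  obtain y0 where "y0 \<in> F" using assms(3) by blast
  then obtain x0 where x0: "x0 \<in> F" and mn: "\<forall>y. y \<in> F \<longrightarrow> card (Ts x0) \<le> card (Ts y)"
    using ex_has_least_nat[of "\<lambda>x. x \<in> F" y0 "\<lambda>x. card (Ts x)"] by blast
  have x0V: "x0 \<in> VO src tgt" using x0 Fsub by blast
  have ineq: "\<And>x m. x \<in> F \<Longrightarrow> m \<in> Xi1 src tgt \<Longrightarrow> 2 * (x \<bullet> m) \<le> qf m"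
    using VO_ineq Xi1_int Fsub by blast
  have key: "Ts x0 \<subseteq> Ts y" if y: "y \<in> F" for y
  proof (rule ccontr)
    assume nsub: "\<not> Ts x0 \<subseteq> Ts y"
    let ?z = "(1/2) *\<^sub>R x0 + (1/2) *\<^sub>R y"
    have zF: "?z \<in> F" using convexD[OF cvx x0 y, of "1/2" "1/2"] by simp
    have "Ts ?z \<subseteq> Ts x0 \<inter> Ts y"
    proof
      fix m assume "m \<in> Ts ?z"
      then have m: "m \<in> Xi1 src tgt" "2 * (?z \<bullet> m) = qf m" unfolding Ts_def Hyp_def by auto
      have "?z \<bullet> m = (x0 \<bullet> m + y \<bullet> m) / 2" by (simp add: inner_add_left)
      then have "x0 \<bullet> m + y \<bullet> m = qf m" using m(2) by simp
      moreover have "2 * (x0 \<bullet> m) \<le> qf m" "2 * (y \<bullet> m) \<le> qf m" using ineq x0 y m(1) by auto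
      ultimately have "2 * (x0 \<bullet> m) = qf m" "2 * (y \<bullet> m) = qf m" by linarith+
      moreover have "x0 \<in> flows src tgt" "y \<in> flows src tgt" using x0 y Fsub VO_flows by blast+
      ultimately show "m \<in> Ts x0 \<inter> Ts y" using m(1) unfolding Ts_def Hyp_def by auto
    qed
    then have "Ts ?z \<subset> Ts x0" using nsub by blast
    moreover have "finite (Ts x0)" unfolding Ts_def using finite_Xi1[of src tgt] by simp
    ultimately have "card (Ts ?z) < card (Ts x0)" by (rule psubset_card_mono[rotated])
    then show False using mn zF by fastforce
  qed
  have U: "{l \<in> Xi1 src tgt. F \<subseteq> Hyp src tgt l} = Ts x0"
  proof
    show "{l \<in> Xi1 src tgt. F \<subseteq> Hyp src tgt l} \<subseteq> Ts x0" using x0 unfolding Ts_def by blast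
    show "Ts x0 \<subseteq> {l \<in> Xi1 src tgt. F \<subseteq> Hyp src tgt l}" using key unfolding Ts_def by blast
  qed
  have Dx: "(\<Union>l \<in> Ts x0. supp l) = Dset src tgt x0"
  proof
    show "(\<Union>l \<in> Ts x0. supp l) \<subseteq> Dset src tgt x0"
    proof
      fix a assume "a \<in> (\<Union>l \<in> Ts x0. supp l)"
      then obtain l where l: "l \<in> Xi1 src tgt" "x0 \<in> Hyp src tgt l" "a \<in> supp l" unfolding Ts_def by blast
      then obtain C where C: "circuit src tgt C" "l = circ_vec C" unfolding Xi1_def by blast
      have "a \<in> C" using l(3) C supp_circ[OF circuit_nb[OF C(1)]] by simp
      moreover have "tight src tgt x0 C" using l(2) C(2) unfolding tight_def by simp
      ultimately show "a \<in> Dset src tgt x0" using C(1) unfolding Dset_def by blast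
    qed
    show "Dset src tgt x0 \<subseteq> (\<Union>l \<in> Ts x0. supp l)"
    proof
      fix a assume "a \<in> Dset src tgt x0"
      then obtain C where C: "circuit src tgt C" "tight src tgt x0 C" "a \<in> C" unfolding Dset_def by blast
      have "circ_vec C \<in> Ts x0" using C unfolding Ts_def Xi1_def tight_def by blast
      moreover have "a \<in> supp (circ_vec C)" using C(3) supp_circ[OF circuit_nb[OF C(1)]] by simp
      ultimately show "a \<in> (\<Union>l \<in> Ts x0. supp l)" by blast
    qed
  qed
  have part2: "\<forall>l \<in> Xi1 src tgt. (l \<in> Ts x0 \<longleftrightarrow> supp l \<subseteq> Dset src tgt x0)"
  proof
    fix l assume l: "l \<in> Xi1 src tgt"
    then obtain C where C: "circuit src tgt C" "l = circ_vec C" unfolding Xi1_def by blast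
    have sC: "supp l = C" using C supp_circ[OF circuit_nb[OF C(1)]] by simp
    show "l \<in> Ts x0 \<longleftrightarrow> supp l \<subseteq> Dset src tgt x0"
    proof
      assume "l \<in> Ts x0" then show "supp l \<subseteq> Dset src tgt x0" using Dx by blast
    next
      assume "supp l \<subseteq> Dset src tgt x0"
      then have "tight src tgt x0 C" using D_tight[OF x0V C(1)] sC by simp
      then show "l \<in> Ts x0" using l C(2) unfolding Ts_def tight_def by simp
    qed
  qed
  show ?thesis unfolding U Dx using D_sc[OF x0V] part2 by blast
qed

end
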